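(* Let $(D, \{ \prec_\alpha, \succ_\alpha \}_{\alpha \in \Omega})$ be a dendriform family algebra and $\{ T_\alpha : M \to A \}_{\alpha \in \Omega}$ an $\mathcal{O}$-operator family. Then there is a bijection $$\mathrm{Hom}_{\mathbf{Ooperf}} \big( \{ \mathrm{Id}_\alpha : D \to (D \otimes \mathbf{k}\Omega)_{\mathrm{Tot}}\},\ \{ T_\alpha : M \to A\} \big) \cong \mathrm{Hom}_{\mathbf{Dendf}} (D, M_{ \{ T_\alpha \} }),$$ natural in both arguments; that is, the functor $\mathcal{G}:\mathbf{Dendf}\to\mathbf{Ooperf}$, $D\mapsto\{\mathrm{Id}_\alpha: D\to(D\otimes\mathbf{k}\Omega)_{\mathrm{Tot}}\}$, is left adjoint to the functor $\mathcal{F}:\mathbf{Ooperf}\to\mathbf{Dendf}$, $\{T_\alpha:M\to A\}\mapsto M_{\{T_\alpha\}}$.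
   Context: $\Omega$ is a semigroup. An $\mathcal{O}$-operator family is a collection of linear maps $T_\alpha:M\to A$ ($A$ associative algebra, $M$ an $A$-bimodule) with $T_\alpha(u) \cdot T_\beta(v) = T_{\alpha\beta}(T_\alpha(u) \cdot v + u \cdot T_\beta(v))$. $\mathbf{Ooperf}$ is the category of $\mathcal{O}$-operator families, where a morphism from $\{T_\alpha:M\to A\}$ to $\{T'_\alpha:M'\to A'\}$ is a pair $(\phi,\psi)$, $\phi:A\to A'$ an algebra homomorphism, $\psi:M\to M'$ linear, with $\psi(a\cdot u)=\phi(a)\cdot'\psi(u)$, $\psi(u\cdot a)=\psi(u)\cdot'\phi(a)$, $\phi\circ T_\alpha=T'_\alpha\circ\psi$. A dendriform family algebra is a vector space $D$ with bilinear maps $\{\prec_\alpha,\succ_\alpha\}_{\alpha\in\Omega}$ such that $(x \prec_\alpha y) \prec_\beta z = x \prec_{\alpha \beta} (y \prec_\beta z + y \succ_\alpha z)$, $(x \succ_\alpha y) \prec_\beta z = x \succ_\alpha (y \prec_\beta z)$, $(x \prec_\beta y + x \succ_\alpha y) \succ_{\alpha \beta} z = x \succ_\alpha (y \succ_\beta z)$; $\mathbf{Dendf}$ is their category with morphisms the linear maps preserving all $\prec_\alpha,\succ_\alpha$. $M_{\{T_\alpha\}}$ denotes $M$ with $u \prec_\alpha v=u \cdot T_\alpha(v)$, $u \succ_\alpha v = T_\alpha(u) \cdot v$ (a dendriform family algebra). $(D\otimes\mathbf{k}\Omega)_{\mathrm{Tot}}$ is the associative algebra $D\otimes\mathbf{k}\Omega$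 with $(x \otimes \alpha) \odot (y \otimes \beta)= (x \prec_{\beta} y + x \succ_{\alpha} y) \otimes \alpha \beta$; $D$ is a $(D\otimes\mathbf{k}\Omega)_{\mathrm{Tot}}$-bimodule via $(x \otimes \alpha) \cdot y= x \succ_{\alpha} y$, $y \cdot (x \otimes \alpha)= y \prec_{\alpha} x$; and $\mathrm{Id}_\alpha:D\to(D\otimes\mathbf{k}\Omega)_{\mathrm{Tot}}$, $\mathrm{Id}_\alpha(x)=x\otimes\alpha$, form an $\mathcal{O}$-operator family. *)

theory Defs
  imports Complex_Main "HOL-Library.Poly_Mapping"
begin

text \<open>Vector spaces over 'k are
  types of class ab_group_add equipped with a scalar multiplication s such that
  vector_space s holds.  The semigroup Omega is a type 'w of class semigroup_mult.\<close>

definition bilin :: "('k::field \<Rightarrow> 'u::ab_group_add \<Rightarrow> 'u) \<Rightarrow> ('k \<Rightarrow> 'v::ab_group_add \<Rightarrow> 'v)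
    \<Rightarrow> ('k \<Rightarrow> 'x::ab_group_add \<Rightarrow> 'x) \<Rightarrow> ('u \<Rightarrow> 'v \<Rightarrow> 'x) \<Rightarrow> bool" where
  "bilin s1 s2 s3 f \<longleftrightarrow> (\<forall>x. Vector_Spaces.linear s2 s3 (f x)) \<and> (\<forall>y. Vector_Spaces.linear s1 s3 (\<lambda>x. f x y))"

record ('k, 'w, 'd) dend =
  dscale :: "'k \<Rightarrow> 'd \<Rightarrow> 'd"
  dprec :: "'w \<Rightarrow> 'd \<Rightarrow> 'd \<Rightarrow> 'd"
  dsucc :: "'w \<Rightarrow> 'd \<Rightarrow> 'd \<Rightarrow> 'd"

definition dendf :: "('k::field, 'w::semigroup_mult, 'd::ab_group_add) dend \<Rightarrow> bool" where
  "dendf D \<longleftrightarrow> vector_space (dscale D)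
    \<and> (\<forall>\<alpha>. bilin (dscale D) (dscale D) (dscale D) (dprec D \<alpha>))
    \<and> (\<forall>\<alpha>. bilin (dscale D) (dscale D) (dscale D) (dsucc D \<alpha>))
    \<and> (\<forall>\<alpha> \<beta> x y z. dprec D \<beta> (dprec D \<alpha> x y) z
          = dprec D (\<alpha> * \<beta>) x (dprec D \<beta> y z + dsucc D \<alpha> y z))
    \<and> (\<forall>\<alpha> \<beta> x y z. dprec D \<beta> (dsucc D \<alpha> x y) z = dsucc D \<alpha> x (dprec D \<beta> y z))
    \<and> (\<forall>\<alpha> \<beta> x y z. dsucc D (\<alpha> * \<beta>) (dprec D \<beta> x y + dsucc D \<alpha> x y) z
          = dsucc D \<alpha> x (dsucc D \<beta> y z))"

definition dend_hom :: "('k::field, 'w, 'd::ab_group_add) dend \<Rightarrow> ('k, 'w, 'e::ab_group_add) dend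
    \<Rightarrow> ('d \<Rightarrow> 'e) set" where
  "dend_hom D E = {f. Vector_Spaces.linear (dscale D) (dscale E) f
     \<and> (\<forall>\<alpha> x y. f (dprec D \<alpha> x y) = dprec E \<alpha> (f x) (f y))
     \<and> (\<forall>\<alpha> x y. f (dsucc D \<alpha> x y) = dsucc E \<alpha> (f x) (f y))}"

record ('k, 'w, 'a, 'm) oopf =
  ascale :: "'k \<Rightarrow> 'a \<Rightarrow> 'a"
  amult :: "'a \<Rightarrow> 'a \<Rightarrow> 'a"
  mscale :: "'k \<Rightarrow> 'm \<Rightarrow> 'm"
  lact :: "'a \<Rightarrow> 'm \<Rightarrow> 'm"
  ract :: "'m \<Rightarrow> 'a \<Rightarrow> 'm"
  oper :: "'w \<Rightarrow> 'm \<Rightarrow> 'a"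

definition assoc_alg :: "('k::field \<Rightarrow> 'a::ab_group_add \<Rightarrow> 'a) \<Rightarrow> ('a \<Rightarrow> 'a \<Rightarrow> 'a) \<Rightarrow> bool" where
  "assoc_alg s m \<longleftrightarrow> vector_space s \<and> bilin s s s m \<and> (\<forall>a b c. m (m a b) c = m a (m b c))"

definition bimodule :: "('k::field \<Rightarrow> 'a::ab_group_add \<Rightarrow> 'a) \<Rightarrow> ('a \<Rightarrow> 'a \<Rightarrow> 'a)
    \<Rightarrow> ('k \<Rightarrow> 'm::ab_group_add \<Rightarrow> 'm) \<Rightarrow> ('a \<Rightarrow> 'm \<Rightarrow> 'm) \<Rightarrow> ('m \<Rightarrow> 'a \<Rightarrow> 'm) \<Rightarrow> bool" where
  "bimodule sA m sM l r \<longleftrightarrow> assoc_alg sA m \<and> vector_space sM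
     \<and> bilin sA sM sM l \<and> bilin sM sA sM r
     \<and> (\<forall>a b u. l (m a b) u = l a (l b u))
     \<and> (\<forall>a b u. r (r u a) b = r u (m a b))
     \<and> (\<forall>a b u. r (l a u) b = l a (r u b))"

definition ooperf :: "('k::field, 'w::semigroup_mult, 'a::ab_group_add, 'm::ab_group_add) oopf \<Rightarrow> bool" where
  "ooperf T \<longleftrightarrow> bimodule (ascale T) (amult T) (mscale T) (lact T) (ract T)
     \<and> (\<forall>\<alpha>. Vector_Spaces.linear (mscale T) (ascale T) (oper T \<alpha>))
     \<and> (\<forall>\<alpha> \<beta> u v. amult T (oper T \<alpha> u) (oper T \<beta> v)
          = oper T (\<alpha> * \<beta>) (lact T (oper T \<alpha> u) v + ract T u (oper T \<beta> v)))"

definition oopf_hom :: "('k::field, 'w, 'a::ab_group_add, 'm::ab_group_add) oopf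
    \<Rightarrow> ('k, 'w, 'b::ab_group_add, 'n::ab_group_add) oopf \<Rightarrow> (('a \<Rightarrow> 'b) \<times> ('m \<Rightarrow> 'n)) set" where
  "oopf_hom T T' = {(\<phi>, \<psi>).
      Vector_Spaces.linear (ascale T) (ascale T') \<phi>
    \<and> (\<forall>a b. \<phi> (amult T a b) = amult T' (\<phi> a) (\<phi> b))
    \<and> Vector_Spaces.linear (mscale T) (mscale T') \<psi>
    \<and> (\<forall>a u. \<psi> (lact T a u) = lact T' (\<phi> a) (\<psi> u))
    \<and> (\<forall>a u. \<psi> (ract T u a) = ract T' (\<psi> u) (\<phi> a))
    \<and> (\<forall>\<alpha>. \<phi> \<circ> oper T \<alpha> = oper T' \<alpha> \<circ> \<psi>)}"

definition oopf_comp :: "('b \<Rightarrow> 'c) \<times> ('n \<Rightarrow> 'p) \<Rightarrow> ('a \<Rightarrow> 'b) \<times> ('m \<Rightarrow> 'n) \<Rightarrow> ('a \<Rightarrow> 'c) \<times> ('m \<Rightarrow> 'p)" where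
  "oopf_comp g f = (fst g \<circ> fst f, snd g \<circ> snd f)"

definition F_obj :: "('k, 'w, 'a, 'm) oopf \<Rightarrow> ('k, 'w, 'm) dend" where
  "F_obj T = \<lparr> dscale = mscale T,
              dprec = (\<lambda>\<alpha> u v. ract T u (oper T \<alpha> v)),
              dsucc = (\<lambda>\<alpha> u v. lact T (oper T \<alpha> u) v) \<rparr>"

definition F_mor :: "('a \<Rightarrow> 'b) \<times> ('m \<Rightarrow> 'n) \<Rightarrow> ('m \<Rightarrow> 'n)" where
  "F_mor p = snd p"

text \<open>D \<otimes> k\<Omega> is represented as finitely supported functions \<Omega> \<rightarrow> D,
  x \<otimes> \<alpha> being Poly_Mapping.single \<alpha> x.\<close>

definition tot_scale :: "('k \<Rightarrow> 'd::zero \<Rightarrow> 'd) \<Rightarrow> 'k \<Rightarrow> ('w \<Rightarrow>\<^sub>0 'd) \<Rightarrow> ('w \<Rightarrow>\<^sub>0 'd)" where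
  "tot_scale s c f = Poly_Mapping.map (s c) f"

definition tot_mult :: "('k, 'w::semigroup_mult, 'd::ab_group_add) dend
    \<Rightarrow> ('w \<Rightarrow>\<^sub>0 'd) \<Rightarrow> ('w \<Rightarrow>\<^sub>0 'd) \<Rightarrow> ('w \<Rightarrow>\<^sub>0 'd)" where
  "tot_mult D f g = (\<Sum>\<alpha>\<in>Poly_Mapping.keys f. \<Sum>\<beta>\<in>Poly_Mapping.keys g.
      Poly_Mapping.single (\<alpha> * \<beta>)
        (dprec D \<beta> (Poly_Mapping.lookup f \<alpha>) (Poly_Mapping.lookup g \<beta>) + dsucc D \<alpha> (Poly_Mapping.lookup f \<alpha>) (Poly_Mapping.lookup g \<beta>)))"

definition tot_lact :: "('k, 'w, 'd::ab_group_add) dend \<Rightarrow> ('w \<Rightarrow>\<^sub>0 'd) \<Rightarrow> 'd \<Rightarrow> 'd" where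
  "tot_lact D f y = (\<Sum>\<alpha>\<in>Poly_Mapping.keys f. dsucc D \<alpha> (Poly_Mapping.lookup f \<alpha>) y)"

definition tot_ract :: "('k, 'w, 'd::ab_group_add) dend \<Rightarrow> 'd \<Rightarrow> ('w \<Rightarrow>\<^sub>0 'd) \<Rightarrow> 'd" where
  "tot_ract D y f = (\<Sum>\<alpha>\<in>Poly_Mapping.keys f. dprec D \<alpha> y (Poly_Mapping.lookup f \<alpha>))"

definition G_obj :: "('k, 'w::semigroup_mult, 'd::ab_group_add) dend \<Rightarrow> ('k, 'w, 'w \<Rightarrow>\<^sub>0 'd, 'd) oopf" where
  "G_obj D = \<lparr> ascale = tot_scale (dscale D),
              amult = tot_mult D,
              mscale = dscale D,
              lact = tot_lact D,
              ract = tot_ract D,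
              oper = (\<lambda>\<alpha> x. Poly_Mapping.single \<alpha> x) \<rparr>"

definition G_mor :: "('d::zero \<Rightarrow> 'e::zero) \<Rightarrow> (('w \<Rightarrow>\<^sub>0 'd) \<Rightarrow> ('w \<Rightarrow>\<^sub>0 'e)) \<times> ('d \<Rightarrow> 'e)" where
  "G_mor g = (Poly_Mapping.map g, g)"

end

theory Submission
  imports Defs
begin


definition ext :: "('w \<Rightarrow> 'd::zero \<Rightarrow> 'b::comm_monoid_add) \<Rightarrow> ('w \<Rightarrow>\<^sub>0 'd) \<Rightarrow> 'b" where
  "ext F f = (\<Sum>\<alpha>\<in>Poly_Mapping.keys f. F \<alpha> (Poly_Mapping.lookup f \<alpha>))"

lemma addh_zero:
  fixes h :: "'a::ab_group_add \<Rightarrow> 'b::ab_group_add"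
  assumes "\<And>x y. h (x + y) = h x + h y" shows "h 0 = 0"
  using assms[of 0 0] by simp

lemma addh_sum:
  fixes h :: "'a::ab_group_add \<Rightarrow> 'b::ab_group_add"
  assumes "\<And>x y. h (x + y) = h x + h y" shows "h (sum g A) = (\<Sum>a\<in>A. h (g a))"
  by (induction A rule: infinite_finite_induct) (auto simp: assms addh_zero[OF assms])

lemma lookup_pmap:
  "g 0 = 0 \<Longrightarrow> Poly_Mapping.lookup (Poly_Mapping.map g f) k = g (Poly_Mapping.lookup f k)"
  by transfer (auto simp: when_def)

lemma pm_expand:
  fixes f :: "'a \<Rightarrow>\<^sub>0 'b::comm_monoid_add"
  shows "f = (\<Sum>\<alpha>\<in>Poly_Mapping.keys f. Poly_Mapping.single \<alpha> (Poly_Mapping.lookup f \<alpha>))"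
proof (rule poly_mapping_eqI)
  fix k
  have *: "finite I \<Longrightarrow> Poly_Mapping.lookup (\<Sum>\<alpha>\<in>I. Poly_Mapping.single \<alpha> (Poly_Mapping.lookup f \<alpha>)) k
     = (if k \<in> I then Poly_Mapping.lookup f k else 0)" for I
    by (induction I rule: finite_induct) (auto simp: lookup_single lookup_add when_def)
  show "Poly_Mapping.lookup f k = Poly_Mapping.lookup (\<Sum>\<alpha>\<in>Poly_Mapping.keys f. Poly_Mapping.single \<alpha> (Poly_Mapping.lookup f \<alpha>)) k"
    by (simp add: * in_keys_iff)
qed

lemma pm_induct:
  assumes s: "\<And>\<alpha> x. P (Poly_Mapping.single \<alpha> x)" and a: "\<And>f g. P f \<Longrightarrow> P g \<Longrightarrow> P (f + g)"
  shows "P (f::'a \<Rightarrow>\<^sub>0 'b::comm_monoid_add)"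
proof -
  have "finite I \<Longrightarrow> P (\<Sum>\<alpha>\<in>I. Poly_Mapping.single \<alpha> (Poly_Mapping.lookup f \<alpha>))" for I
  proof (induction I rule: finite_induct)
    case empty
    then show ?case using s[of undefined 0] by simp
  next
    case (insert x F)
    then show ?case by (simp add: a s)
  qed
  then show ?thesis using pm_expand[of f] by (metis finite_keys)
qed

lemma ext_superset:
  assumes "finite A" "Poly_Mapping.keys f \<subseteq> A" "\<And>\<alpha>. F \<alpha> 0 = 0"
  shows "ext F f = (\<Sum>\<alpha>\<in>A. F \<alpha> (Poly_Mapping.lookup f \<alpha>))"
  unfolding ext_def using assms
  by (intro sum.mono_neutral_left) (auto simp: in_keys_iff)

lemma ext_add:
  fixes F :: "'w \<Rightarrow> 'd::ab_group_add \<Rightarrow> 'b::ab_group_add"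
  assumes "\<And>\<alpha> x y. F \<alpha> (x + y) = F \<alpha> x + F \<alpha> y"
  shows "ext F (f + g) = ext F f + ext F g"
proof -
  have z: "\<And>\<alpha>. F \<alpha> 0 = 0" by (rule addh_zero) (rule assms)
  show ?thesis unfolding ext_def
    by (rule setsum_keys_plus_distrib) (auto simp: assms z)
qed

lemma ext_single:
  "F \<alpha> 0 = 0 \<Longrightarrow> ext F (Poly_Mapping.single \<alpha> x) = F \<alpha> x"
  unfolding ext_def by auto

lemma ext_fun_add: "ext (\<lambda>\<alpha> x. F \<alpha> x + G \<alpha> x) f = ext F f + ext G f"
  unfolding ext_def by (simp add: sum.distrib)

lemma ext_fun_hom:
  fixes h :: "'a::ab_group_add \<Rightarrow> 'b::ab_group_add"
  assumes "\<And>x y. h (x + y) = h x + h y" shows "h (ext F f) = ext (\<lambda>\<alpha> x. h (F \<alpha> x)) f"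
  unfolding ext_def by (rule addh_sum[OF assms])

lemma lin_add: "Vector_Spaces.linear s1 s2 f \<Longrightarrow> f (x + y) = f x + f y"
  by (simp add: Vector_Spaces.linear_iff)
lemma lin_scale: "Vector_Spaces.linear s1 s2 f \<Longrightarrow> f (s1 c x) = s2 c (f x)"
  by (simp add: Vector_Spaces.linear_iff)
lemma lin_zero: "Vector_Spaces.linear s1 s2 f \<Longrightarrow> f 0 = 0"
  by (rule addh_zero) (simp add: Vector_Spaces.linear_iff)
lemma lin_vs1: "Vector_Spaces.linear s1 s2 f \<Longrightarrow> vector_space s1"
  by (simp add: Vector_Spaces.linear_iff)
lemma lin_vs2: "Vector_Spaces.linear s1 s2 f \<Longrightarrow> vector_space s2"
  by (simp add: Vector_Spaces.linear_iff)

lemma vs_zero: "vector_space s \<Longrightarrow> s c 0 = 0"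
  by (rule addh_zero) (simp add: vector_space_def)
lemma vs_add: "vector_space s \<Longrightarrow> s c (x + y) = s c x + s c y"
  by (simp add: vector_space_def)

lemma ts_single: "vector_space s \<Longrightarrow> tot_scale s c (Poly_Mapping.single \<alpha> x) = Poly_Mapping.single \<alpha> (s c x)"
  unfolding tot_scale_def by (simp add: vs_zero)

lemma ts_add: "vector_space s \<Longrightarrow> tot_scale s c (f + g) = tot_scale s c f + tot_scale s c g"
  unfolding tot_scale_def
  by (rule poly_mapping_eqI) (simp add: lookup_pmap vs_zero lookup_add vs_add)

lemma vs_tot: "vector_space s \<Longrightarrow> vector_space (tot_scale s)"
  unfolding vector_space_def tot_scale_def
  by (auto intro!: poly_mapping_eqI simp: lookup_pmap vs_zero[unfolded vector_space_def] lookup_add)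

lemma lin_single: "vector_space s \<Longrightarrow> Vector_Spaces.linear s (tot_scale s) (Poly_Mapping.single \<alpha>)"
  by (simp add: Vector_Spaces.linear_iff vs_tot ts_single single_add)

lemma bilin_l: "bilin s1 s2 s3 f \<Longrightarrow> Vector_Spaces.linear s1 s3 (\<lambda>x. f x y)"
  by (simp add: bilin_def)
lemma bilin_r: "bilin s1 s2 s3 f \<Longrightarrow> Vector_Spaces.linear s2 s3 (f x)"
  by (simp add: bilin_def)

context
  fixes D :: "('k::field, 'w::semigroup_mult, 'd::ab_group_add) dend"
  assumes dD: "dendf D"
begin

lemma vsD: "vector_space (dscale D)" using dD by (simp add: dendf_def)
lemma P_lin_l: "Vector_Spaces.linear (dscale D) (dscale D) (\<lambda>x. dprec D \<alpha> x y)"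
  using dD by (simp add: dendf_def bilin_def)
lemma P_lin_r: "Vector_Spaces.linear (dscale D) (dscale D) (dprec D \<alpha> x)"
  using dD by (simp add: dendf_def bilin_def)
lemma S_lin_l: "Vector_Spaces.linear (dscale D) (dscale D) (\<lambda>x. dsucc D \<alpha> x y)"
  using dD by (simp add: dendf_def bilin_def)
lemma S_lin_r: "Vector_Spaces.linear (dscale D) (dscale D) (dsucc D \<alpha> x)"
  using dD by (simp add: dendf_def bilin_def)
lemma ax1: "dprec D \<beta> (dprec D \<alpha> x y) z = dprec D (\<alpha> * \<beta>) x (dprec D \<beta> y z + dsucc D \<alpha> y z)"
  using dD by (simp add: dendf_def)
lemma ax2: "dprec D \<beta> (dsucc D \<alpha> x y) z = dsucc D \<alpha> x (dprec D \<beta> y z)"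
  using dD by (simp add: dendf_def)
lemma ax3: "dsucc D (\<alpha> * \<beta>) (dprec D \<beta> x y + dsucc D \<alpha> x y) z = dsucc D \<alpha> x (dsucc D \<beta> y z)"
  using dD by (simp add: dendf_def)

lemmas P_add_l = lin_add[OF P_lin_l] and P_add_r = lin_add[OF P_lin_r]
   and S_add_l = lin_add[OF S_lin_l] and S_add_r = lin_add[OF S_lin_r]
   and P_scale_l = lin_scale[OF P_lin_l] and P_scale_r = lin_scale[OF P_lin_r]
   and S_scale_l = lin_scale[OF S_lin_l] and S_scale_r = lin_scale[OF S_lin_r]
   and P_zero_l = lin_zero[OF P_lin_l] and P_zero_r = lin_zero[OF P_lin_r]
   and S_zero_l = lin_zero[OF S_lin_l] and S_zero_r = lin_zero[OF S_lin_r]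

lemma tm_ext: "tot_mult D f g = ext (\<lambda>\<alpha> x. ext (\<lambda>\<beta> y. Poly_Mapping.single (\<alpha> * \<beta>)
        (dprec D \<beta> x y + dsucc D \<alpha> x y)) g) f"
  unfolding tot_mult_def ext_def ..

lemma tm_inner_add: "ext (\<lambda>\<beta> y. Poly_Mapping.single (\<alpha> * \<beta>) (dprec D \<beta> (x1 + x2) y + dsucc D \<alpha> (x1 + x2) y)) g
  = ext (\<lambda>\<beta> y. Poly_Mapping.single (\<alpha> * \<beta>) (dprec D \<beta> x1 y + dsucc D \<alpha> x1 y)) g
  + ext (\<lambda>\<beta> y. Poly_Mapping.single (\<alpha> * \<beta>) (dprec D \<beta> x2 y + dsucc D \<alpha> x2 y)) g"
  by (simp add: P_add_l S_add_l ext_fun_add[symmetric] single_add[symmetric] algebra_simps)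

lemma tm_add_l: "tot_mult D (f1 + f2) g = tot_mult D f1 g + tot_mult D f2 g"
  unfolding tm_ext by (rule ext_add) (rule tm_inner_add)

lemma tm_add_r: "tot_mult D f (g1 + g2) = tot_mult D f g1 + tot_mult D f g2"
  unfolding tm_ext
  by (simp add: ext_add P_add_r S_add_r single_add[symmetric] algebra_simps ext_fun_add[symmetric])

lemma tm_single: "tot_mult D (Poly_Mapping.single \<alpha> x) (Poly_Mapping.single \<beta> y)
   = Poly_Mapping.single (\<alpha> * \<beta>) (dprec D \<beta> x y + dsucc D \<alpha> x y)"
  unfolding tm_ext
  by (simp add: ext_single P_zero_l S_zero_l P_zero_r S_zero_r ext_def)

lemma tl_ext: "tot_lact D f y = ext (\<lambda>\<alpha> x. dsucc D \<alpha> x y) f"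
  unfolding tot_lact_def ext_def ..
lemma tr_ext: "tot_ract D y f = ext (\<lambda>\<alpha> x. dprec D \<alpha> y x) f"
  unfolding tot_ract_def ext_def ..
lemma tl_add_l: "tot_lact D (f1 + f2) y = tot_lact D f1 y + tot_lact D f2 y"
  unfolding tl_ext by (rule ext_add) (rule S_add_l)
lemma tl_add_r: "tot_lact D f (y1 + y2) = tot_lact D f y1 + tot_lact D f y2"
  unfolding tl_ext by (simp add: S_add_r ext_fun_add)
lemma tr_add_r: "tot_ract D y (f1 + f2) = tot_ract D y f1 + tot_ract D y f2"
  unfolding tr_ext by (rule ext_add) (rule P_add_r)
lemma tr_add_l: "tot_ract D (y1 + y2) f = tot_ract D y1 f + tot_ract D y2 f"
proof -
  have "(\<lambda>\<alpha>. dprec D \<alpha> (y1 + y2)) = (\<lambda>\<alpha> x. dprec D \<alpha> y1 x + dprec D \<alpha> y2 x)"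
    by (simp add: fun_eq_iff P_add_l)
  then show ?thesis unfolding tr_ext by (simp add: ext_fun_add)
qed
lemma tl_single: "tot_lact D (Poly_Mapping.single \<alpha> x) y = dsucc D \<alpha> x y"
  unfolding tl_ext by (simp add: ext_single S_zero_l)
lemma tr_single: "tot_ract D y (Poly_Mapping.single \<alpha> x) = dprec D \<alpha> y x"
  unfolding tr_ext by (simp add: ext_single P_zero_r)

lemma tm_scale_l: "tot_mult D (tot_scale (dscale D) c f) g = tot_scale (dscale D) c (tot_mult D f g)"
  apply (induction f rule: pm_induct)
  subgoal for \<alpha> x
    by (induction g rule: pm_induct)
      (simp_all add: ts_single vsD tm_single tm_add_r ts_add P_scale_l S_scale_l vs_add)
  by (simp add: ts_add vsD tm_add_l)

lemma tm_scale_r: "tot_mult D f (tot_scale (dscale D) c g) = tot_scale (dscale D) c (tot_mult D f g)"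
  apply (induction f rule: pm_induct)
  subgoal for \<alpha> x
    by (induction g rule: pm_induct)
      (simp_all add: ts_single vsD tm_single tm_add_r ts_add P_scale_r S_scale_r vs_add)
  by (simp add: ts_add vsD tm_add_l)

lemma tl_scale_l: "tot_lact D (tot_scale (dscale D) c f) y = dscale D c (tot_lact D f y)"
  by (induction f rule: pm_induct)
    (simp_all add: ts_single vsD tl_single tl_add_l ts_add S_scale_l vs_add)
lemma tl_scale_r: "tot_lact D f (dscale D c y) = dscale D c (tot_lact D f y)"
  by (induction f rule: pm_induct)
    (simp_all add: tl_single tl_add_l S_scale_r vs_add vsD)
lemma tr_scale_r: "tot_ract D y (tot_scale (dscale D) c f) = dscale D c (tot_ract D y f)"
  by (induction f rule: pm_induct)
    (simp_all add: ts_single vsD tr_single tr_add_r ts_add P_scale_r vs_add)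
lemma tr_scale_l: "tot_ract D (dscale D c y) f = dscale D c (tot_ract D y f)"
  by (induction f rule: pm_induct)
    (simp_all add: tr_single tr_add_r P_scale_l vs_add vsD)

lemma key3: "dprec D \<gamma> (dprec D \<beta> x y + dsucc D \<alpha> x y) z + dsucc D (\<alpha> * \<beta>) (dprec D \<beta> x y + dsucc D \<alpha> x y) z
  = dprec D (\<beta> * \<gamma>) x (dprec D \<gamma> y z + dsucc D \<beta> y z) + dsucc D \<alpha> x (dprec D \<gamma> y z + dsucc D \<beta> y z)"
  apply (simp only: ax3)
  by (simp add: P_add_l ax1 ax2 S_add_r algebra_simps)

lemma tm_assoc: "tot_mult D (tot_mult D f g) h = tot_mult D f (tot_mult D g h)"
  apply (induction f rule: pm_induct)
  subgoal for \<alpha> x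
    apply (induction g rule: pm_induct)
    subgoal for \<beta> y
      apply (induction h rule: pm_induct)
      subgoal for \<gamma> z by (simp add: tm_single key3 mult.assoc)
      by (simp add: tm_add_r)
    by (simp add: tm_add_r tm_add_l)
  by (simp add: tm_add_l)

lemma tl_assoc: "tot_lact D (tot_mult D a b) u = tot_lact D a (tot_lact D b u)"
  apply (induction a rule: pm_induct)
  subgoal for \<alpha> x
    apply (induction b rule: pm_induct)
    subgoal for \<beta> y by (simp add: tm_single tl_single ax3)
    by (simp add: tm_add_r tl_add_l tl_add_r)
  by (simp add: tm_add_l tl_add_l)

lemma tr_assoc: "tot_ract D (tot_ract D u a) b = tot_ract D u (tot_mult D a b)"
  apply (induction a rule: pm_induct)
  subgoal for \<alpha> x
    apply (induction b rule: pm_induct)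
    subgoal for \<beta> y by (simp add: tm_single tr_single ax1)
    by (simp add: tm_add_r tr_add_l tr_add_r)
  by (simp add: tm_add_l tr_add_l tr_add_r)

lemma tlr_assoc: "tot_ract D (tot_lact D a u) b = tot_lact D a (tot_ract D u b)"
  apply (induction a rule: pm_induct)
  subgoal for \<alpha> x
    apply (induction b rule: pm_induct)
    subgoal for \<beta> y by (simp add: tl_single tr_single ax2)
    by (simp add: tl_add_r tr_add_r)
  by (simp add: tl_add_l tr_add_l)

lemma G_ooperf: "ooperf (G_obj D)"
  unfolding ooperf_def bimodule_def assoc_alg_def bilin_def G_obj_def
  by (simp add: Vector_Spaces.linear_iff vs_tot vsD tm_add_l tm_add_r tm_scale_l tm_scale_r
     tl_add_l tl_add_r tl_scale_l tl_scale_r tr_add_l tr_add_r tr_scale_l tr_scale_r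
     tm_assoc tl_assoc tr_assoc tlr_assoc ts_single single_add tm_single tl_single tr_single add.commute)

end


context
  fixes T :: "('k::field, 'w::semigroup_mult, 'a::ab_group_add, 'm::ab_group_add) oopf"
  assumes oT: "ooperf T"
begin

lemma vsA: "vector_space (ascale T)" using oT by (simp add: ooperf_def bimodule_def assoc_alg_def)
lemma vsM: "vector_space (mscale T)" using oT by (simp add: ooperf_def bimodule_def)
lemma am_lin_l: "Vector_Spaces.linear (ascale T) (ascale T) (\<lambda>a. amult T a b)"
  using oT by (simp add: ooperf_def bimodule_def assoc_alg_def bilin_def)
lemma am_lin_r: "Vector_Spaces.linear (ascale T) (ascale T) (amult T a)"
  using oT by (simp add: ooperf_def bimodule_def assoc_alg_def bilin_def)
lemma l_lin_l: "Vector_Spaces.linear (ascale T) (mscale T) (\<lambda>a. lact T a u)"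
  using oT by (simp add: ooperf_def bimodule_def bilin_def)
lemma l_lin_r: "Vector_Spaces.linear (mscale T) (mscale T) (lact T a)"
  using oT by (simp add: ooperf_def bimodule_def bilin_def)
lemma r_lin_l: "Vector_Spaces.linear (mscale T) (mscale T) (\<lambda>u. ract T u a)"
  using oT by (simp add: ooperf_def bimodule_def bilin_def)
lemma r_lin_r: "Vector_Spaces.linear (ascale T) (mscale T) (ract T u)"
  using oT by (simp add: ooperf_def bimodule_def bilin_def)
lemma op_lin: "Vector_Spaces.linear (mscale T) (ascale T) (oper T \<alpha>)"
  using oT by (simp add: ooperf_def)
lemma l_assoc: "lact T (amult T a b) u = lact T a (lact T b u)"
  using oT by (simp add: ooperf_def bimodule_def)
lemma r_assoc: "ract T (ract T u a) b = ract T u (amult T a b)"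
  using oT by (simp add: ooperf_def bimodule_def)
lemma lr_assoc: "ract T (lact T a u) b = lact T a (ract T u b)"
  using oT by (simp add: ooperf_def bimodule_def)
lemma Oop: "amult T (oper T \<alpha> u) (oper T \<beta> v) = oper T (\<alpha> * \<beta>) (lact T (oper T \<alpha> u) v + ract T u (oper T \<beta> v))"
  using oT by (simp add: ooperf_def)

lemmas am_add_l = lin_add[OF am_lin_l] and am_add_r = lin_add[OF am_lin_r]
  and l_add_l = lin_add[OF l_lin_l] and l_add_r = lin_add[OF l_lin_r]
  and r_add_l = lin_add[OF r_lin_l] and r_add_r = lin_add[OF r_lin_r]
  and op_add = lin_add[OF op_lin]
  and l_scale_l = lin_scale[OF l_lin_l] and l_scale_r = lin_scale[OF l_lin_r]
  and r_scale_l = lin_scale[OF r_lin_l] and r_scale_r = lin_scale[OF r_lin_r]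
  and op_scale = lin_scale[OF op_lin]
  and op_zero = lin_zero[OF op_lin]
  and l_zero_l = lin_zero[OF l_lin_l] and r_zero_r = lin_zero[OF r_lin_r]
  and am_zero_l = lin_zero[OF am_lin_l] and am_zero_r = lin_zero[OF am_lin_r]

lemma F_dendf: "dendf (F_obj T)"
  unfolding dendf_def F_obj_def bilin_def
  by (simp add: Vector_Spaces.linear_iff vsM vsA l_add_l l_add_r r_add_l r_add_r op_add
      l_scale_l l_scale_r r_scale_l r_scale_r op_scale r_assoc lr_assoc
      l_assoc[symmetric] Oop add.commute)

end


lemma pmap_add: fixes g :: "'a::ab_group_add \<Rightarrow> 'b::ab_group_add" shows "(\<And>x y. g (x + y) = g x + g y) \<Longrightarrow>
   Poly_Mapping.map g (f1 + f2) = Poly_Mapping.map g f1 + Poly_Mapping.map g f2"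
proof -
  assume a: "\<And>x y. g (x + y) = g x + g y"
  have "g 0 = 0" by (rule addh_zero) (rule a)
  then show ?thesis by (intro poly_mapping_eqI) (simp add: lookup_pmap lookup_add a)
qed

lemma G_mor_hom:
  fixes D :: "('k::field, 'w::semigroup_mult, 'd::ab_group_add) dend"
    and D' :: "('k, 'w, 'd2::ab_group_add) dend"
  assumes dD: "dendf D" and dD': "dendf D'" and g: "g \<in> dend_hom D' D"
  shows "G_mor g \<in> oopf_hom (G_obj D') (G_obj D)"
proof -
  have gl: "Vector_Spaces.linear (dscale D') (dscale D) g"
    and gP: "\<And>\<alpha> x y. g (dprec D' \<alpha> x y) = dprec D \<alpha> (g x) (g y)"
    and gS: "\<And>\<alpha> x y. g (dsucc D' \<alpha> x y) = dsucc D \<alpha> (g x) (g y)"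
    using g by (auto simp: dend_hom_def)
  note ga = lin_add[OF gl] and gz = lin_zero[OF gl] and gs = lin_scale[OF gl]
  have ma: "Poly_Mapping.map g (f1 + f2) = Poly_Mapping.map g f1 + Poly_Mapping.map g f2" for f1 f2
    by (rule pmap_add) (rule ga)
  have ms: "Poly_Mapping.map g (Poly_Mapping.single \<alpha> x) = Poly_Mapping.single \<alpha> (g x)" for \<alpha> x
    by (simp add: gz)
  have mlin: "Vector_Spaces.linear (tot_scale (dscale D')) (tot_scale (dscale D)) (Poly_Mapping.map g)"
    unfolding Vector_Spaces.linear_iff
    by (auto simp: vs_tot vsD[OF dD] vsD[OF dD'] ma tot_scale_def intro!: poly_mapping_eqI
        simp add: lookup_pmap gz vs_zero[OF vsD[OF dD]] vs_zero[OF vsD[OF dD']] gs)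
  have mm: "Poly_Mapping.map g (tot_mult D' a b) = tot_mult D (Poly_Mapping.map g a) (Poly_Mapping.map g b)" for a b
    apply (induction a rule: pm_induct)
    subgoal for \<alpha> x
      apply (induction b rule: pm_induct)
      subgoal for \<beta> y by (simp add: ms tm_single[OF dD] tm_single[OF dD'] gP gS ga)
      by (simp add: ma tm_add_r[OF dD] tm_add_r[OF dD'])
    by (simp add: ma tm_add_l[OF dD] tm_add_l[OF dD'])
  have ml: "g (tot_lact D' a u) = tot_lact D (Poly_Mapping.map g a) (g u)" for a u
    by (induction a rule: pm_induct)
      (simp_all add: ms ma tl_single[OF dD] tl_single[OF dD'] tl_add_l[OF dD] tl_add_l[OF dD'] gS ga)
  have mr: "g (tot_ract D' u a) = tot_ract D (g u) (Poly_Mapping.map g a)" for a u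
    by (induction a rule: pm_induct)
      (simp_all add: ms ma tr_single[OF dD] tr_single[OF dD'] tr_add_r[OF dD] tr_add_r[OF dD'] gP ga)
  show ?thesis
    unfolding oopf_hom_def G_mor_def G_obj_def
    by (simp add: mlin gl mm ml mr ms fun_eq_iff)
qed

lemma F_mor_hom:
  fixes T :: "('k::field, 'w::semigroup_mult, 'a::ab_group_add, 'm::ab_group_add) oopf"
    and T' :: "('k, 'w, 'a2::ab_group_add, 'm2::ab_group_add) oopf"
  assumes "h \<in> oopf_hom T T'"
  shows "F_mor h \<in> dend_hom (F_obj T) (F_obj T')"
  using assms unfolding oopf_hom_def dend_hom_def F_mor_def F_obj_def
  by (auto simp: fun_eq_iff)


lemma bij_part:
  fixes D :: "('k::field, 'w::semigroup_mult, 'd::ab_group_add) dend"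
    and T :: "('k, 'w, 'a::ab_group_add, 'm::ab_group_add) oopf"
  assumes dD: "dendf D" and oT: "ooperf T"
  shows "bij_betw F_mor (oopf_hom (G_obj D) T) (dend_hom D (F_obj T))"
proof -
  let ?H = "oopf_hom (G_obj D) T"
  have hs: "\<phi> (Poly_Mapping.single \<alpha> x) = oper T \<alpha> (\<psi> x)" if "(\<phi>, \<psi>) \<in> ?H" for \<phi> \<psi> \<alpha> x
  proof -
    have "\<phi> \<circ> Poly_Mapping.single \<alpha> = oper T \<alpha> \<circ> \<psi>" using that by (simp add: oopf_hom_def G_obj_def)
    then show ?thesis by (metis comp_apply)
  qed
  have hadd: "\<phi> (f1 + f2) = \<phi> f1 + \<phi> f2" if "(\<phi>, \<psi>) \<in> ?H" for \<phi> \<psi> f1 f2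
    using that by (simp add: oopf_hom_def Vector_Spaces.linear_iff)
  have inj: "inj_on F_mor ?H"
  proof (rule inj_onI)
    fix p q assume p: "p \<in> ?H" and q: "q \<in> ?H" and e: "F_mor p = F_mor q"
    obtain \<phi>1 \<psi> where p': "p = (\<phi>1, \<psi>)" by (cases p)
    obtain \<phi>2 \<psi>2 where q': "q = (\<phi>2, \<psi>2)" by (cases q)
    have "\<psi>2 = \<psi>" using e p' q' by (simp add: F_mor_def)
    then have p1: "(\<phi>1, \<psi>) \<in> ?H" and q1: "(\<phi>2, \<psi>) \<in> ?H" using p q p' q' by auto
    have "\<phi>1 f = \<phi>2 f" for f
      by (induction f rule: pm_induct) (simp_all add: hs[OF p1] hs[OF q1] hadd[OF p1] hadd[OF q1])
    then show "p = q" using p' q' \<open>\<psi>2 = \<psi>\<close> by auto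
  qed
  have img1: "F_mor p \<in> dend_hom D (F_obj T)" if "p \<in> ?H" for p
  proof -
    obtain \<phi> \<psi> where p': "p = (\<phi>, \<psi>)" by (cases p)
    have h: "(\<phi>, \<psi>) \<in> ?H" using that p' by simp
    have "\<psi> (dprec D \<alpha> x y) = ract T (\<psi> x) (oper T \<alpha> (\<psi> y))" for \<alpha> x y
    proof -
      have "\<psi> (tot_ract D x (Poly_Mapping.single \<alpha> y)) = ract T (\<psi> x) (\<phi> (Poly_Mapping.single \<alpha> y))"
        using h by (simp add: oopf_hom_def G_obj_def)
      then show ?thesis by (simp add: tr_single[OF dD] hs[OF h])
    qed
    moreover have "\<psi> (dsucc D \<alpha> x y) = lact T (oper T \<alpha> (\<psi> x)) (\<psi> y)" for \<alpha> x y
    proof -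
      have "\<psi> (tot_lact D (Poly_Mapping.single \<alpha> x) y) = lact T (\<phi> (Poly_Mapping.single \<alpha> x)) (\<psi> y)"
        using h by (simp add: oopf_hom_def G_obj_def)
      then show ?thesis by (simp add: tl_single[OF dD] hs[OF h])
    qed
    moreover have "Vector_Spaces.linear (dscale D) (mscale T) \<psi>"
      using h by (simp add: oopf_hom_def G_obj_def)
    ultimately show ?thesis by (simp add: p' F_mor_def dend_hom_def F_obj_def)
  qed
  have img2: "\<psi> \<in> F_mor ` ?H" if psi: "\<psi> \<in> dend_hom D (F_obj T)" for \<psi>
  proof -
    have pl: "Vector_Spaces.linear (dscale D) (mscale T) \<psi>"
      and pP: "\<And>\<alpha> x y. \<psi> (dprec D \<alpha> x y) = ract T (\<psi> x) (oper T \<alpha> (\<psi> y))"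
      and pS: "\<And>\<alpha> x y. \<psi> (dsucc D \<alpha> x y) = lact T (oper T \<alpha> (\<psi> x)) (\<psi> y)"
      using psi by (auto simp: dend_hom_def F_obj_def)
    note pa = lin_add[OF pl] and pz = lin_zero[OF pl] and ps = lin_scale[OF pl]
    define \<phi> where "\<phi> = ext (\<lambda>\<alpha> x. oper T \<alpha> (\<psi> x))"
    have fa: "\<phi> (f1 + f2) = \<phi> f1 + \<phi> f2" for f1 f2
      unfolding \<phi>_def by (rule ext_add) (simp add: pa op_add[OF oT])
    have fs: "\<phi> (Poly_Mapping.single \<alpha> x) = oper T \<alpha> (\<psi> x)" for \<alpha> x
      unfolding \<phi>_def by (rule ext_single) (simp add: pz op_zero[OF oT])
    have fsc: "\<phi> (tot_scale (dscale D) c f) = ascale T c (\<phi> f)" for c f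
      by (induction f rule: pm_induct)
        (simp_all add: fs fa ts_single ts_add vsD[OF dD] ps op_scale[OF oT] vs_add vsA[OF oT])
    have flin: "Vector_Spaces.linear (tot_scale (dscale D)) (ascale T) \<phi>"
      unfolding Vector_Spaces.linear_iff by (simp add: vs_tot vsD[OF dD] vsA[OF oT] fa fsc)
    have fm: "\<phi> (tot_mult D a b) = amult T (\<phi> a) (\<phi> b)" for a b
      apply (induction a rule: pm_induct)
      subgoal for \<alpha> x
        apply (induction b rule: pm_induct)
        subgoal for \<beta> y by (simp add: tm_single[OF dD] fs pa pP pS Oop[OF oT] add.commute)
        by (simp add: fa tm_add_r[OF dD] am_add_r[OF oT])
      by (simp add: fa tm_add_l[OF dD] am_add_l[OF oT])
    have fl: "\<psi> (tot_lact D a u) = lact T (\<phi> a) (\<psi> u)" for a u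
      by (induction a rule: pm_induct)
        (simp_all add: fs fa tl_single[OF dD] tl_add_l[OF dD] pS pa l_add_l[OF oT])
    have fr: "\<psi> (tot_ract D u a) = ract T (\<psi> u) (\<phi> a)" for a u
      by (induction a rule: pm_induct)
        (simp_all add: fs fa tr_single[OF dD] tr_add_r[OF dD] pP pa r_add_r[OF oT])
    have "(\<phi>, \<psi>) \<in> ?H"
      unfolding oopf_hom_def G_obj_def by (simp add: flin fm pl fl fr fs fun_eq_iff)
    then show ?thesis by (force simp: F_mor_def)
  qed
  show ?thesis unfolding bij_betw_def using inj img1 img2 by blast
qed


theorem proposition2p17:
  fixes D :: "('k::field, 'w::semigroup_mult, 'd::ab_group_add) dend"
    and T :: "('k, 'w, 'a::ab_group_add, 'm::ab_group_add) oopf"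
    and D' :: "('k, 'w, 'd2::ab_group_add) dend"
    and T' :: "('k, 'w, 'a2::ab_group_add, 'm2::ab_group_add) oopf"
  assumes "dendf D" and "ooperf T" and "dendf D'" and "ooperf T'"
  shows "ooperf (G_obj D) \<and> dendf (F_obj T)
    \<and> (\<forall>g \<in> dend_hom D' D. G_mor g \<in> oopf_hom (G_obj D') (G_obj D))
    \<and> (\<forall>h \<in> oopf_hom T T'. F_mor h \<in> dend_hom (F_obj T) (F_obj T'))
    \<and> bij_betw F_mor (oopf_hom (G_obj D) T) (dend_hom D (F_obj T))
    \<and> (\<forall>g \<in> dend_hom D' D. \<forall>h \<in> oopf_hom T T'. \<forall>p \<in> oopf_hom (G_obj D) T.
          F_mor (oopf_comp h (oopf_comp p (G_mor g))) = F_mor h \<circ> F_mor p \<circ> g)"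
    using G_ooperf[OF assms(1)] F_dendf[OF assms(2)] G_mor_hom[OF assms(1) assms(3)]
    F_mor_hom bij_part[OF assms(1) assms(2)]
  by (auto simp: F_mor_def oopf_comp_def G_mor_def)

end
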